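(* Let $\bar f:[a,b]\to\mathbb{R}_\mathcal{I}$ be continuous. If $\bar F:[a,b]\to\mathbb{R}_\mathcal{I}$ is a primitive of $\bar f$ on $[a,b]$, i.e. $\bar F'(x)=\bar f(x)$ for all $x\in[a,b]$, then $$\bar F(b)-\bar F(a)=(IR)\int_a^b\bar f(t)\,dt.$$
   Context: An interval number is a closed interval $\bar a=[a_l,a_r]$ with $a_l<a_r$ real; $\mathbb{R}_\mathcal{I}$ is the set of interval numbers. Write $a_c=(a_l+a_r)/2$, $a_w=(a_r-a_l)/2>0$, $\bar a=\langle a_c;a_w\rangle=[a_c-a_w,a_c+a_w]$. Operations: $\bar a+\bar b=\langle a_c+b_c;a_wb_w\rangle$, $\bar a-\bar b=\langle a_c-b_c;a_w/b_w\rangle$, $k\bar a=\langle ka_c;a_w^k\rangle$ for real $k$; for real $h\ne0$, $\bar c/h=\langle c_c/h;c_w^{1/h}\rangle$. Distance $d(\bar a,\bar b)=\sqrt{(a_c-b_c)^2+(\ln a_w-\ln b_w)^2}$; continuity and limits w.r.t. $d$. Derivative: $\bar F'(x)=\lim_{h\to0}\frac{\bar F(x+h)-\bar F(x)}{h}$. Interval Riemann integral: $\bar A=(IR)\int_a^b\bar f$ if for every $\varepsilon>0$ there is $\delta>0$ such that for every partition $a=t_0<\dots<t_n=b$ with mesh $<\delta$ and tags $\xi_i\in[t_{i-1},t_i]$, $d(\sum_i(t_i-t_{i-1})\bar f(\xi_i),\bar A)<\varepsilon$. *)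

theory Defs
  imports Complex_Main
begin

typedef ival = "{(l::real, r::real). l < r}" morphisms ival_rep Ival
  by (rule exI[of _ "(0,1)"]) auto

definition ic :: "ival \<Rightarrow> real" where
  "ic a = (fst (ival_rep a) + snd (ival_rep a)) / 2"

definition iw :: "ival \<Rightarrow> real" where
  "iw a = (snd (ival_rep a) - fst (ival_rep a)) / 2"

text \<open>The interval number with centre c and width w (meaningful for w > 0).\<close>
definition mk_ival :: "real \<Rightarrow> real \<Rightarrow> ival" where
  "mk_ival c w = Ival (c - w, c + w)"

definition iadd :: "ival \<Rightarrow> ival \<Rightarrow> ival" where
  "iadd a b = mk_ival (ic a + ic b) (iw a * iw b)"

definition isub :: "ival \<Rightarrow> ival \<Rightarrow> ival" where
  "isub a b = mk_ival (ic a - ic b) (iw a / iw b)"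

definition iscale :: "real \<Rightarrow> ival \<Rightarrow> ival" where
  "iscale k a = mk_ival (k * ic a) (iw a powr k)"

definition idiv :: "ival \<Rightarrow> real \<Rightarrow> ival" where
  "idiv c h = mk_ival (ic c / h) (iw c powr (1 / h))"

definition idist :: "ival \<Rightarrow> ival \<Rightarrow> real" where
  "idist a b = sqrt ((ic a - ic b)^2 + (ln (iw a) - ln (iw b))^2)"

text \<open>Finite interval sums g 0 + ... + g (n-1); the empty sum is the neutral
  element <0;1> = [-1,1] of iadd.\<close>
primrec isum :: "(nat \<Rightarrow> ival) \<Rightarrow> nat \<Rightarrow> ival" where
  "isum g 0 = mk_ival 0 1"
| "isum g (Suc n) = iadd (isum g n) (g n)"

definition icont_on :: "real \<Rightarrow> real \<Rightarrow> (real \<Rightarrow> ival) \<Rightarrow> bool" where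
  "icont_on a b f \<longleftrightarrow> (\<forall>x\<in>{a..b}. \<forall>\<epsilon>>0. \<exists>\<delta>>0. \<forall>y\<in>{a..b}.
      \<bar>y - x\<bar> < \<delta> \<longrightarrow> idist (f y) (f x) < \<epsilon>)"

definition ihas_deriv :: "real \<Rightarrow> real \<Rightarrow> (real \<Rightarrow> ival) \<Rightarrow> ival \<Rightarrow> real \<Rightarrow> bool" where
  "ihas_deriv a b F D x \<longleftrightarrow> (\<forall>\<epsilon>>0. \<exists>\<delta>>0. \<forall>h. h \<noteq> 0 \<and> \<bar>h\<bar> < \<delta> \<and> x + h \<in> {a..b} \<longrightarrow>
      idist (idiv (isub (F (x + h)) (F x)) h) D < \<epsilon>)"

definition has_IR_integral :: "(real \<Rightarrow> ival) \<Rightarrow> real \<Rightarrow> real \<Rightarrow> ival \<Rightarrow> bool" where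
  "has_IR_integral f a b A \<longleftrightarrow> (\<forall>\<epsilon>>0. \<exists>\<delta>>0. \<forall>(n::nat) (t::nat \<Rightarrow> real) (\<xi>::nat \<Rightarrow> real).
      (n \<ge> 1 \<and> t 0 = a \<and> t n = b \<and> (\<forall>i<n. t i < t (Suc i)) \<and> (\<forall>i<n. t (Suc i) - t i < \<delta>)
       \<and> (\<forall>i<n. t i \<le> \<xi> i \<and> \<xi> i \<le> t (Suc i)))
      \<longrightarrow> idist (isum (\<lambda>i. iscale (t (Suc i) - t i) (f (\<xi> i))) n) A < \<epsilon>)"

end

theory Submission
  imports Defs "HOL-Analysis.Analysis"
begin

lemma iw_pos: "iw a > 0"
  using ival_rep[of a] by (auto simp: iw_def split: prod.splits)

lemma mk_ival_c: "w > 0 \<Longrightarrow> ic (mk_ival c w) = c"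
  unfolding mk_ival_def ic_def by (simp add: Ival_inverse)

lemma mk_ival_w: "w > 0 \<Longrightarrow> iw (mk_ival c w) = w"
  unfolding mk_ival_def iw_def by (simp add: Ival_inverse)

lemma iadd_c: "ic (iadd a b) = ic a + ic b"
  unfolding iadd_def using iw_pos[of a] iw_pos[of b] by (simp add: mk_ival_c)
lemma iadd_w: "ln (iw (iadd a b)) = ln (iw a) + ln (iw b)"
  unfolding iadd_def using iw_pos[of a] iw_pos[of b] by (simp add: mk_ival_w ln_mult)
lemma isub_c: "ic (isub a b) = ic a - ic b"
  unfolding isub_def using iw_pos[of a] iw_pos[of b] by (simp add: mk_ival_c)
lemma isub_w: "ln (iw (isub a b)) = ln (iw a) - ln (iw b)"
  unfolding isub_def using iw_pos[of a] iw_pos[of b] by (simp add: mk_ival_w ln_div)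
lemma iscale_c: "ic (iscale k a) = k * ic a"
  unfolding iscale_def using iw_pos[of a] by (simp add: mk_ival_c)
lemma iscale_w: "ln (iw (iscale k a)) = k * ln (iw a)"
  unfolding iscale_def using iw_pos[of a] by (simp add: mk_ival_w ln_powr)
lemma idiv_c: "ic (idiv a h) = ic a / h"
  unfolding idiv_def using iw_pos[of a] by (simp add: mk_ival_c)
lemma idiv_w: "ln (iw (idiv a h)) = ln (iw a) / h"
  unfolding idiv_def using iw_pos[of a] by (simp add: mk_ival_w ln_powr)

lemma isum_c: "ic (isum g n) = (\<Sum>i<n. ic (g i))"
  by (induction n) (simp_all add: mk_ival_c iadd_c)
lemma isum_w: "ln (iw (isum g n)) = (\<Sum>i<n. ln (iw (g i)))"
  by (induction n) (simp_all add: mk_ival_w iadd_w)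

lemma idist_ge_c: "\<bar>ic a - ic b\<bar> \<le> idist a b"
  unfolding idist_def by (rule real_sqrt_ge_abs1)
lemma idist_ge_w: "\<bar>ln (iw a) - ln (iw b)\<bar> \<le> idist a b"
  unfolding idist_def by (metis add.commute real_sqrt_ge_abs1)

lemma deriv_comp:
  assumes d: "ihas_deriv a b F D x"
    and P: "\<And>h. \<bar>p (idiv (isub (F (x + h)) (F x)) h) - p D\<bar> \<le> idist (idiv (isub (F (x + h)) (F x)) h) D"
    and Q: "\<And>h. p (idiv (isub (F (x + h)) (F x)) h) = (G (x+h) - G x) / h"
  shows "(G has_field_derivative p D) (at x within {a..b})"
  unfolding has_field_derivative_iff tendsto_iff eventually_at
proof (intro allI impI)
  fix e :: real assume "e > 0"
  then obtain d where d0: "d > 0" and dd: "\<forall>h. h \<noteq> 0 \<and> \<bar>h\<bar> < d \<and> x + h \<in> {a..b} \<longrightarrow>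
      idist (idiv (isub (F (x + h)) (F x)) h) D < e"
    using d unfolding ihas_deriv_def by blast
  show "\<exists>d>0. \<forall>y\<in>{a..b}. y \<noteq> x \<and> dist y x < d \<longrightarrow> dist ((G y - G x) / (y - x)) (p D) < e"
  proof (intro exI[of _ d] conjI ballI impI d0)
    fix y assume y: "y \<in> {a..b}" "y \<noteq> x \<and> dist y x < d"
    define h where "h = y - x"
    have yh: "y = x + h" by (simp add: h_def)
    have "idist (idiv (isub (F (x + h)) (F x)) h) D < e"
      using dd y by (auto simp: yh dist_real_def)
    then show "dist ((G y - G x) / (y - x)) (p D) < e"
      using P[of h] Q[of h] by (simp add: yh dist_real_def)
  qed
qed

lemma t_mono:
  assumes "\<forall>i<n. (t::nat\<Rightarrow>real) i < t (Suc i)" "i \<le> j" "j \<le> n"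
  shows "t i \<le> t j"
  using assms(2,3)
proof (induction j)
  case 0 then show ?case by simp
next
  case (Suc j)
  show ?case
  proof (cases "i = Suc j")
    case False
    then have "t i \<le> t j" using Suc by simp
    moreover have "t j < t (Suc j)" using assms(1) Suc by simp
    ultimately show ?thesis by simp
  qed simp
qed

lemma riemann_real:
  fixes G g :: "real \<Rightarrow> real"
  assumes ab: "a < b" and cont: "continuous_on {a..b} g"
    and der: "\<And>x. x \<in> {a..b} \<Longrightarrow> (G has_field_derivative g x) (at x within {a..b})"
    and e: "e > 0"
  shows "\<exists>\<delta>>0. \<forall>n t \<xi>. n \<ge> 1 \<and> t 0 = a \<and> t n = b \<and> (\<forall>i<n. t i < t (Suc i)) \<and> (\<forall>i<n. t (Suc i) - t i < \<delta>)
       \<and> (\<forall>i<n. t i \<le> \<xi> i \<and> \<xi> i \<le> t (Suc i)) \<longrightarrow>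
      \<bar>(\<Sum>i<n. (t (Suc i) - t i) * g (\<xi> i)) - (G b - G a)\<bar> \<le> e"
proof -
  have uc: "uniformly_continuous_on {a..b} g" using compact_uniformly_continuous[OF cont compact_Icc] .
  have ep: "e / (b - a) > 0" using ab e by simp
  obtain d where d0: "d > 0" and dd: "\<forall>x\<in>{a..b}. \<forall>x'\<in>{a..b}. dist x' x < d \<longrightarrow> dist (g x') (g x) < e / (b - a)"
    using uc ep unfolding uniformly_continuous_on_def by blast
  show ?thesis
  proof (intro exI[of _ d] conjI allI impI d0)
    fix n t \<xi>
    assume H: "n \<ge> 1 \<and> t 0 = a \<and> t n = b \<and> (\<forall>i<n. t i < t (Suc i)) \<and> (\<forall>i<n. t (Suc i) - t i < d)
       \<and> (\<forall>i<n. t i \<le> \<xi> i \<and> \<xi> i \<le> t (Suc i))"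
    have tin: "a \<le> t i \<and> t i \<le> b" if "i \<le> n" for i
      using t_mono[of n t 0 i] t_mono[of n t i n] H that by auto
    have "\<forall>i. i < n \<longrightarrow> (\<exists>\<eta>. t i < \<eta> \<and> \<eta> < t (Suc i) \<and> G (t (Suc i)) - G (t i) = (t (Suc i) - t i) * g \<eta>)"
    proof (intro allI impI)
      fix i assume i: "i < n"
      have sub: "{t i..t (Suc i)} \<subseteq> {a..b}" using tin[of i] tin[of "Suc i"] i by auto
      have "\<exists>x\<in>{t i<..<t (Suc i)}. G (t (Suc i)) - G (t i) = (\<lambda>h. g x * h) (t (Suc i) - t i)"
      proof (rule mvt_simple)
        show "t i < t (Suc i)" using H i by blast
        fix x assume "t i \<le> x" "x \<le> t (Suc i)"
        then have "x \<in> {a..b}" using sub by auto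
        from has_field_derivative_subset[OF der[OF this] sub]
        show "(G has_derivative (\<lambda>h. g x * h)) (at x within {t i..t (Suc i)})"
          by (simp add: has_field_derivative_def)
      qed
      then show "\<exists>\<eta>. t i < \<eta> \<and> \<eta> < t (Suc i) \<and> G (t (Suc i)) - G (t i) = (t (Suc i) - t i) * g \<eta>"
        by (auto simp: mult.commute)
    qed
    then obtain \<eta> where eta: "\<And>i. i < n \<Longrightarrow> t i < \<eta> i \<and> \<eta> i < t (Suc i) \<and> G (t (Suc i)) - G (t i) = (t (Suc i) - t i) * g (\<eta> i)"
      by metis
    have "G b - G a = (\<Sum>i<n. G (t (Suc i)) - G (t i))"
      using H sum_lessThan_telescope[of "\<lambda>i. G (t i)" n] by simp
    also have "\<dots> = (\<Sum>i<n. (t (Suc i) - t i) * g (\<eta> i))"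
      using eta by (intro sum.cong) auto
    finally have GE: "G b - G a = (\<Sum>i<n. (t (Suc i) - t i) * g (\<eta> i))" .
    have "\<bar>(\<Sum>i<n. (t (Suc i) - t i) * g (\<xi> i)) - (G b - G a)\<bar>
        = \<bar>\<Sum>i<n. (t (Suc i) - t i) * (g (\<xi> i) - g (\<eta> i))\<bar>"
      unfolding GE by (simp add: sum_subtractf[symmetric] algebra_simps)
    also have "\<dots> \<le> (\<Sum>i<n. \<bar>(t (Suc i) - t i) * (g (\<xi> i) - g (\<eta> i))\<bar>)"
      by (rule sum_abs)
    also have "\<dots> \<le> (\<Sum>i<n. (t (Suc i) - t i) * (e / (b - a)))"
    proof (intro sum_mono)
      fix i assume "i \<in> {..<n}"
      then have i: "i < n" by simp
      have pos: "t (Suc i) - t i > 0" using H i by simp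
      have xi: "\<xi> i \<in> {a..b}" using H i tin[of i] tin[of "Suc i"] by auto
      have et: "\<eta> i \<in> {a..b}" using eta[OF i] tin[of i] tin[of "Suc i"] i by auto
      have "t (Suc i) - t i < d" "t i \<le> \<xi> i" "\<xi> i \<le> t (Suc i)" using H i by auto
      then have "dist (\<xi> i) (\<eta> i) < d"
        using eta[OF i] by (auto simp: dist_real_def abs_less_iff)
      then have "\<bar>g (\<xi> i) - g (\<eta> i)\<bar> < e / (b - a)"
        using dd xi et by (auto simp: dist_real_def)
      then show "\<bar>(t (Suc i) - t i) * (g (\<xi> i) - g (\<eta> i))\<bar> \<le> (t (Suc i) - t i) * (e / (b - a))"
        using pos by (simp only: abs_mult abs_of_pos[OF pos]) (intro mult_left_mono, auto)
    qed
    also have "\<dots> = (\<Sum>i<n. t (Suc i) - t i) * (e / (b - a))"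
      by (rule sum_distrib_right[symmetric])
    also have "\<dots> = e"
      using H ab sum_lessThan_telescope[of t n] by simp
    finally show "\<bar>(\<Sum>i<n. (t (Suc i) - t i) * g (\<xi> i)) - (G b - G a)\<bar> \<le> e" .
  qed
qed

theorem theorem5p7:
  fixes f F :: "real \<Rightarrow> ival" and a b :: real
  assumes "a < b"
    and "icont_on a b f"
    and "\<forall>x\<in>{a..b}. ihas_deriv a b F (f x) x"
  shows "has_IR_integral f a b (isub (F b) (F a))"
proof -
  have contc: "continuous_on {a..b} (\<lambda>x. ic (f x))"
    unfolding continuous_on_iff
  proof (intro ballI allI impI)
    fix x e assume x: "x \<in> {a..b}" and e: "(e::real) > 0"
    then obtain d where "d > 0" "\<forall>y\<in>{a..b}. \<bar>y - x\<bar> < d \<longrightarrow> idist (f y) (f x) < e"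
      using assms(2) unfolding icont_on_def by blast
    then show "\<exists>d>0. \<forall>x'\<in>{a..b}. dist x' x < d \<longrightarrow> dist (ic (f x')) (ic (f x)) < e"
      by (metis dist_real_def idist_ge_c order.strict_trans1)
  qed
  have contw: "continuous_on {a..b} (\<lambda>x. ln (iw (f x)))"
    unfolding continuous_on_iff
  proof (intro ballI allI impI)
    fix x e assume x: "x \<in> {a..b}" and e: "(e::real) > 0"
    then obtain d where "d > 0" "\<forall>y\<in>{a..b}. \<bar>y - x\<bar> < d \<longrightarrow> idist (f y) (f x) < e"
      using assms(2) unfolding icont_on_def by blast
    then show "\<exists>d>0. \<forall>x'\<in>{a..b}. dist x' x < d \<longrightarrow> dist (ln (iw (f x'))) (ln (iw (f x))) < e"
      by (metis dist_real_def idist_ge_w order.strict_trans1)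
  qed
  have derc: "((\<lambda>x. ic (F x)) has_field_derivative ic (f x)) (at x within {a..b})" if "x \<in> {a..b}" for x
    apply (rule deriv_comp[where p=ic, OF assms(3)[rule_format, OF that]])
     apply (rule idist_ge_c)
    apply (simp add: idiv_c isub_c)
    done
  have derw: "((\<lambda>x. ln (iw (F x))) has_field_derivative ln (iw (f x))) (at x within {a..b})" if "x \<in> {a..b}" for x
    apply (rule deriv_comp[where p="\<lambda>u. ln (iw u)", OF assms(3)[rule_format, OF that]])
     apply (rule idist_ge_w)
    apply (simp add: idiv_w isub_w)
    done
  show ?thesis
    unfolding has_IR_integral_def
  proof (intro allI impI)
    fix e :: real assume e: "e > 0"
    then have e4: "e / 4 > 0" by simp
    obtain d1 where d1: "d1 > 0" and D1: "\<forall>n t \<xi>. n \<ge> 1 \<and> t 0 = a \<and> t n = b \<and> (\<forall>i<n. t i < t (Suc i)) \<and> (\<forall>i<n. t (Suc i) - t i < d1)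
       \<and> (\<forall>i<n. t i \<le> \<xi> i \<and> \<xi> i \<le> t (Suc i)) \<longrightarrow>
      \<bar>(\<Sum>i<n. (t (Suc i) - t i) * ic (f (\<xi> i))) - (ic (F b) - ic (F a))\<bar> \<le> e / 4"
      using riemann_real[OF assms(1) contc derc e4] by blast
    obtain d2 where d2: "d2 > 0" and D2: "\<forall>n t \<xi>. n \<ge> 1 \<and> t 0 = a \<and> t n = b \<and> (\<forall>i<n. t i < t (Suc i)) \<and> (\<forall>i<n. t (Suc i) - t i < d2)
       \<and> (\<forall>i<n. t i \<le> \<xi> i \<and> \<xi> i \<le> t (Suc i)) \<longrightarrow>
      \<bar>(\<Sum>i<n. (t (Suc i) - t i) * ln (iw (f (\<xi> i)))) - (ln (iw (F b)) - ln (iw (F a)))\<bar> \<le> e / 4"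
      using riemann_real[OF assms(1) contw derw e4] by blast
    show "\<exists>\<delta>>0. \<forall>(n::nat) (t::nat \<Rightarrow> real) (\<xi>::nat \<Rightarrow> real).
      (n \<ge> 1 \<and> t 0 = a \<and> t n = b \<and> (\<forall>i<n. t i < t (Suc i)) \<and> (\<forall>i<n. t (Suc i) - t i < \<delta>)
       \<and> (\<forall>i<n. t i \<le> \<xi> i \<and> \<xi> i \<le> t (Suc i)))
      \<longrightarrow> idist (isum (\<lambda>i. iscale (t (Suc i) - t i) (f (\<xi> i))) n) (isub (F b) (F a)) < e"
    proof (intro exI[of _ "min d1 d2"] conjI allI impI)
      show "min d1 d2 > 0" using d1 d2 by simp
      fix n t \<xi>
      assume H: "n \<ge> 1 \<and> t 0 = a \<and> t n = b \<and> (\<forall>i<n. t i < t (Suc i)) \<and> (\<forall>i<n. t (Suc i) - t i < min d1 d2)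
       \<and> (\<forall>i<n. t i \<le> \<xi> i \<and> \<xi> i \<le> t (Suc i))"
      have X: "\<bar>(\<Sum>i<n. (t (Suc i) - t i) * ic (f (\<xi> i))) - (ic (F b) - ic (F a))\<bar> \<le> e / 4"
        using D1 H by auto
      have Y: "\<bar>(\<Sum>i<n. (t (Suc i) - t i) * ln (iw (f (\<xi> i)))) - (ln (iw (F b)) - ln (iw (F a)))\<bar> \<le> e / 4"
        using D2 H by auto
      have "idist (isum (\<lambda>i. iscale (t (Suc i) - t i) (f (\<xi> i))) n) (isub (F b) (F a))
          = sqrt (((\<Sum>i<n. (t (Suc i) - t i) * ic (f (\<xi> i))) - (ic (F b) - ic (F a)))^2
             + ((\<Sum>i<n. (t (Suc i) - t i) * ln (iw (f (\<xi> i)))) - (ln (iw (F b)) - ln (iw (F a))))^2)"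
        unfolding idist_def isum_c isum_w iscale_c iscale_w isub_c isub_w ..
      also have "\<dots> \<le> e / 4 + e / 4"
        using sqrt_sum_squares_le_sum_abs X Y by (smt (verit))
      also have "\<dots> < e" using e by simp
      finally show "idist (isum (\<lambda>i. iscale (t (Suc i) - t i) (f (\<xi> i))) n) (isub (F b) (F a)) < e" .
    qed
  qed
qed

end
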